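(* Let $p>0$ be a real number and let $n=\lceil p\rceil$. Then the power function $\Phi:\mathbb{R}_+\to\mathbb{R}_+$, $\Phi(x)=x^p$, is subadditive of order $n$.
   Context: $\mathbb{R}_+$ denotes the set of nonnegative real numbers. For $n\in\mathbb{N}$ and an interval $I\subseteq\mathbb{R}_+$, a function $\Phi: I\to\mathbb{R}_+$ is called subadditive of order $n$ if for all $x,y\in I$ with $y>0$ and $x+y\in I$ one has $\Phi(x+y)\leq \Phi(x)+\frac{(x+y)^n-x^n}{y^n}\Phi(y)$. *)

theory Defs
  imports "HOL-Analysis.Analysis"
begin

definition subadditive_of_order :: "nat \<Rightarrow> real set \<Rightarrow> (real \<Rightarrow> real) \<Rightarrow> bool" where
  "subadditive_of_order n I \<Phi> \<longleftrightarrow>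
     I \<subseteq> {0..} \<and> is_interval I \<and> (\<forall>x\<in>I. \<Phi> x \<ge> 0) \<and>
     (\<forall>x\<in>I. \<forall>y\<in>I. y > 0 \<longrightarrow> x + y \<in> I \<longrightarrow>
        \<Phi> (x + y) \<le> \<Phi> x + ((x + y) ^ n - x ^ n) / y ^ n * \<Phi> y)"

end

theory Submission
  imports Defs
begin

lemma key:
  fixes t p r :: real
  assumes t: "t \<ge> 0" and p: "p > 0" and r: "r \<ge> 0"
  shows "(t+1) powr p - t powr p \<le> (t+1) powr (p+r) - t powr (p+r)"
proof (cases "t \<le> 1")
  case True
  have "t powr (p+r) = t powr p * t powr r" by (simp add: powr_add)
  moreover have "t powr r \<le> 1"
  proof (cases "t = 0")
    case True then show ?thesis by simp
  next
    case False then show ?thesis using True t r by (simp add: powr_le1)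
  qed
  moreover have "t powr p \<ge> 0" by simp
  ultimately have A: "t powr (p+r) \<le> t powr p" by (simp add: mult_left_le)
  have "(t+1) powr p \<le> (t+1) powr (p+r)" using t r by (simp add: powr_mono)
  with A show ?thesis by linarith
next
  case False
  have e1: "t powr (p+r) = t powr p * t powr r" by (simp add: powr_add)
  have e2: "(t+1) powr (p+r) = (t+1) powr p * (t+1) powr r" by (simp add: powr_add)
  have a: "t powr p \<le> (t+1) powr p" using t p by (simp add: powr_mono2)
  have b: "t powr r \<le> (t+1) powr r" using t r by (simp add: powr_mono2)
  have c: "1 \<le> t powr r" using False r by (simp add: ge_one_powr_ge_zero)
  have "t powr p * (t powr r - 1) \<le> (t+1) powr p * ((t+1) powr r - 1)"
    using a b c by (intro mult_mono) auto
  then show ?thesis using e1 e2 by (simp add: algebra_simps)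
qed

theorem corollary2p2:
  fixes p :: real and n :: nat
  assumes "p > 0" and "n = nat \<lceil>p\<rceil>"
  shows "subadditive_of_order n {0..} (\<lambda>x. x powr p)"
  unfolding subadditive_of_order_def
proof (intro conjI ballI impI)
  show "{0..} \<subseteq> {0::real..}" by simp
  show "is_interval {0::real..}" by (simp add: is_interval_ci)
  fix x assume "x \<in> {0::real..}" then show "0 \<le> x powr p" by simp
next
  fix x y :: real
  assume x: "x \<in> {0..}" and y: "y \<in> {0..}" and yp: "0 < y" and "x + y \<in> {0..}"
  have x0: "x \<ge> 0" using x by simp
  have pn: "p \<le> real n" using assms by linarith
  have n1: "n \<ge> 1" using assms by linarith
  define t where "t = x / y"
  have t0: "t \<ge> 0" using x0 yp by (simp add: t_def)
  have xt: "x = t * y" using yp by (simp add: t_def)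
  have xy: "x + y = (t+1) * y" using xt by (simp add: algebra_simps)
  have K: "(t+1) powr p - t powr p \<le> (t+1) powr (real n) - t powr (real n)"
    using key[OF t0 \<open>p>0\<close>, of "real n - p"] pn by simp
  have P1: "(t+1) powr (real n) = (t+1) ^ n" using t0 by (simp add: powr_realpow)
  have P2: "t powr (real n) = t ^ n"
  proof (cases "t = 0")
    case True then show ?thesis using n1 by simp
  next
    case False then show ?thesis using t0 by (simp add: powr_realpow)
  qed
  have yn: "y ^ n > 0" using yp by simp
  have "((x + y) ^ n - x ^ n) / y ^ n = (t+1)^n - t^n"
  proof -
    have "(x + y) ^ n - x ^ n = ((t+1)^n - t^n) * y ^ n"
    proof -
      have "(x+y)^n = (t+1)^n * y^n" by (simp only: xy power_mult_distrib)
      moreover have "x^n = t^n * y^n" by (simp only: xt power_mult_distrib)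
      ultimately show ?thesis by (simp add: algebra_simps)
    qed
    then show ?thesis using yp by simp
  qed
  moreover have "(x+y) powr p = (t+1) powr p * y powr p" using t0 yp xy
    by (simp add: powr_mult)
  moreover have "x powr p = t powr p * y powr p" using t0 yp xt
    by (simp add: powr_mult)
  moreover have "(t+1) powr p * y powr p \<le> t powr p * y powr p + ((t+1)^n - t^n) * y powr p"
  proof -
    have "((t+1) powr p - t powr p) * y powr p \<le> ((t+1)^n - t^n) * y powr p"
      using K P1 P2 by (intro mult_right_mono) auto
    then show ?thesis by (simp add: algebra_simps)
  qed
  ultimately show "(x + y) powr p \<le> x powr p + ((x + y) ^ n - x ^ n) / y ^ n * y powr p"
    by simp
qed

end
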